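(* Let $f\in\mathcal{S}_d$ and $\sigma>0$. Then for every prime $p$ the series $\sum_{n=0}^\infty\frac{|D_f(n,p)|}{p^{n\sigma}}$ converges, and it is bounded independently of $p$.
   Context: $\mathcal{S}_d$ is the set of multiplicative functions $f=f_1*\cdots*f_d$ where each $f_i$ is completely multiplicative with $|f_i(n)|\le1$, and $(a*b)(n)=\sum_{dm=n}a(d)b(m)$. For a prime $p$ and integer $k\ge1$, $D_f(k,p)$ is the determinant of the $k\times k$ matrix $(a_{ij})$ with $a_{ij}=f(p^{i-j+1})$ if $i-j+1\ge0$ and $a_{ij}=0$ otherwise; $D_f(0,p)=1$. *)

theory Defs
  imports Complex_Main "Jordan_Normal_Form.Determinant"
begin

(* Arithmetic functions are modelled as nat => complex; only arguments n >= 1 matter. *)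

definition compl_mult :: "(nat \<Rightarrow> complex) \<Rightarrow> bool" where
  "compl_mult g \<longleftrightarrow> g 1 = 1 \<and> (\<forall>m n. m > 0 \<longrightarrow> n > 0 \<longrightarrow> g (m * n) = g m * g n)"

definition dirichlet_conv :: "(nat \<Rightarrow> complex) \<Rightarrow> (nat \<Rightarrow> complex) \<Rightarrow> nat \<Rightarrow> complex" where
  "dirichlet_conv a b n = (\<Sum>k\<in>{k. k dvd n}. a k * b (n div k))"

definition dirichlet_unit :: "nat \<Rightarrow> complex" where
  "dirichlet_unit n = (if n = 1 then 1 else 0)"

fun conv_all :: "(nat \<Rightarrow> nat \<Rightarrow> complex) \<Rightarrow> nat \<Rightarrow> nat \<Rightarrow> complex" where
  "conv_all fs 0 = dirichlet_unit"
| "conv_all fs (Suc k) = dirichlet_conv (conv_all fs k) (fs k)"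

definition in_S :: "nat \<Rightarrow> (nat \<Rightarrow> complex) \<Rightarrow> bool" where
  "in_S d f \<longleftrightarrow> (\<exists>fs. (\<forall>i<d. compl_mult (fs i) \<and> (\<forall>n>0. cmod (fs i n) \<le> 1))
                      \<and> (\<forall>n>0. f n = conv_all fs d n))"

(* D_f(k,p): determinant of k x k matrix a_ij = f(p^(i-j+1)) if i-j+1 >= 0, else 0.
   Indices are 0-based here; i-j+1 is unchanged. det of the 0x0 matrix is 1. *)
definition D_f :: "(nat \<Rightarrow> complex) \<Rightarrow> nat \<Rightarrow> nat \<Rightarrow> complex" where
  "D_f f k p = det (mat k k (\<lambda>(i, j). if j \<le> i + 1 then f (p ^ (i + 1 - j)) else 0))"

end

theory Submission
  imports Defs "HOL-Computational_Algebra.Formal_Power_Series" "HOL-Computational_Algebra.Primes"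
begin

no_notation vec_index (infixl \<open>$\<close> 100)
notation fps_nth (infixl \<open>$\<close> 75)

definition Gs :: "complex \<Rightarrow> complex fps" where "Gs a = Abs_fps (\<lambda>n. a^n)"
definition Cp :: "(nat \<Rightarrow> complex) \<Rightarrow> nat \<Rightarrow> complex fps" where "Cp \<alpha> k = (\<Prod>i<k. Gs (\<alpha> i))"
definition Bp :: "(nat \<Rightarrow> complex) \<Rightarrow> nat \<Rightarrow> complex fps" where
  "Bp \<alpha> k = (\<Prod>i<k. 1 - fps_const (\<alpha> i) * fps_X)"

lemma G_inv: "(1 - fps_const a * fps_X) * Gs a = 1"
proof (rule fps_ext)
  fix n
  have "(1 - fps_const a * fps_X) * Gs a = Gs a - fps_const a * (fps_X * Gs a)"
    by (simp add: algebra_simps)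
  then show "((1 - fps_const a * fps_X) * Gs a) $ n = (1::complex fps) $ n"
    by (cases n) (auto simp: Gs_def)
qed

lemma BC: "Bp \<alpha> k * Cp \<alpha> k = 1"
  unfolding Bp_def Cp_def prod.distrib[symmetric] G_inv by simp

lemma B_Suc_nth: "Bp \<alpha> (Suc k) $ n = Bp \<alpha> k $ n - (if n = 0 then 0 else \<alpha> k * Bp \<alpha> k $ (n-1))"
proof -
  have "Bp \<alpha> (Suc k) = Bp \<alpha> k - fps_const (\<alpha> k) * (fps_X * Bp \<alpha> k)"
    unfolding Bp_def by (simp add: algebra_simps)
  then show ?thesis by simp
qed

lemma B_props: "Bp \<alpha> k $ 0 = 1 \<and> (\<forall>n>k. Bp \<alpha> k $ n = 0) \<and>
   ((\<forall>i<k. cmod (\<alpha> i) \<le> 1) \<longrightarrow> (\<forall>n. cmod (Bp \<alpha> k $ n) \<le> 2^k))"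
proof (induction k)
  case 0
  then show ?case by (auto simp: Bp_def)
next
  case (Suc k)
  have a: "Bp \<alpha> (Suc k) $ 0 = 1" using Suc by (simp add: B_Suc_nth)
  have b: "\<forall>n>Suc k. Bp \<alpha> (Suc k) $ n = 0" using Suc by (simp add: B_Suc_nth)
  have c: "cmod (Bp \<alpha> (Suc k) $ n) \<le> 2^Suc k" if h: "\<forall>i<Suc k. cmod (\<alpha> i) \<le> 1" for n
  proof -
    have h1: "\<forall>n. cmod (Bp \<alpha> k $ n) \<le> 2^k" using Suc h by auto
    have "cmod (Bp \<alpha> (Suc k) $ n) \<le> cmod (Bp \<alpha> k $ n) + cmod (\<alpha> k) * cmod (Bp \<alpha> k $ (n-1))"
      unfolding B_Suc_nth by (auto intro: order_trans[OF norm_triangle_ineq4] simp: norm_mult)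
    also have "\<dots> \<le> 2^k + 1 * 2^k"
      using h1 h by (intro add_mono mult_mono) auto
    finally show ?thesis by simp
  qed
  show ?case using a b c by blast
qed

lemma cm_pow: assumes "compl_mult g" "p > 0" shows "g (p^m) = g p ^ m"
  using assms by (induction m) (auto simp: compl_mult_def)

lemma conv_pp:
  assumes p: "prime p" and fs: "\<forall>i<d. compl_mult (fs i)" and k: "k \<le> d"
  shows "conv_all fs k (p^n) = Cp (\<lambda>i. fs i p) k $ n"
  using k
proof (induction k arbitrary: n)
  case 0
  have "p > 1" using p prime_gt_1_nat by blast
  then show ?case by (simp add: Cp_def dirichlet_unit_def)
next
  case (Suc k)
  have p0: "p > 1" using p prime_gt_1_nat by blast
  have D: "{x. x dvd p^n} = (\<lambda>j. p^j) ` {..n}"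
    using divides_primepow_nat[OF p] by auto
  have inj: "inj_on (\<lambda>j. p^j) {..n}" using p0 by (auto simp: inj_on_def)
  have cm: "compl_mult (fs k)" using fs Suc by auto
  have "conv_all fs (Suc k) (p^n) = (\<Sum>j\<le>n. conv_all fs k (p^j) * fs k (p^n div p^j))"
    by (simp add: dirichlet_conv_def D sum.reindex[OF inj])
  also have "\<dots> = (\<Sum>j=0..n. Cp (\<lambda>i. fs i p) k $ j * Gs (fs k p) $ (n - j))"
    unfolding atLeast0AtMost
  proof (rule sum.cong[OF refl])
    fix j assume "j \<in> {..n}"
    then have "p^n div p^j = p^(n-j)" using p0 by (simp add: power_diff)
    then show "conv_all fs k (p^j) * fs k (p^n div p^j) = Cp (\<lambda>i. fs i p) k $ j * Gs (fs k p) $ (n - j)"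
      using Suc cm p0 by (simp add: cm_pow Gs_def)
  qed
  also have "\<dots> = Cp (\<lambda>i. fs i p) (Suc k) $ n"
    by (simp add: Cp_def fps_mult_nth)
  finally show ?case .
qed

lemma sum_entry:
  fixes b c :: "nat \<Rightarrow> complex"
  assumes conv: "\<forall>n. (\<Sum>m=0..n. c m * b (n-m)) = (if n=0 then 1 else 0)" and c0: "c 0 = 1"
    and i: "i < k"
  shows "(\<Sum>l\<in>{0..<k}. (if l \<le> i then b (i-l) else 0) * (if j \<le> l+1 then c (l+1-j) else 0))
       = (if j = 0 then - b (i+1) else if j = i+1 then 1 else 0)"
proof -
  have e: "(\<lambda>l. (if l \<le> i then b (i-l) else 0) * (if j \<le> l+1 then c (l+1-j) else 0))
     = (\<lambda>l. if l \<le> i \<and> j \<le> l+1 then b (i-l) * c (l+1-j) else 0)" by auto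
  have s: "(\<Sum>l\<in>{0..<k}. (if l \<le> i then b (i-l) else 0) * (if j \<le> l+1 then c (l+1-j) else 0))
       = (\<Sum>l\<in>{l\<in>{0..<k}. l \<le> i \<and> j \<le> l+1}. b (i-l) * c (l+1-j))"
    unfolding e by (rule sum.inter_filter[symmetric]) simp
  show ?thesis
  proof (cases "j = 0")
    case True
    have set: "{l\<in>{0..<k}. l \<le> i \<and> j \<le> l+1} = {0..i}" using i True by auto
    have "(\<Sum>m=0..Suc i. c m * b (Suc i - m)) = 0" using conv[rule_format, of "Suc i"] by (simp del: sum.atLeast0_atMost_Suc)
    then have "c 0 * b (Suc i) + (\<Sum>l=0..i. c (Suc l) * b (Suc i - Suc l)) = 0"
      unfolding sum.atLeast0_atMost_Suc_shift by (simp add: o_def)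
    then have "c 0 * b (Suc i) + (\<Sum>l=0..i. c (Suc l) * b (i - l)) = 0" by simp
    then have "(\<Sum>l=0..i. b (i - l) * c (l + 1)) = - b (i+1)" using c0
      by (simp add: mult.commute eq_neg_iff_add_eq_0 add.commute)
    then show ?thesis using True s set by simp
  next
    case False
    show ?thesis
    proof (cases "j \<le> i + 1")
      case True
      define n where "n = i + 1 - j"
      have set: "{l\<in>{0..<k}. l \<le> i \<and> j \<le> l+1} = {0 + (j-1)..n + (j-1)}"
        using i True False unfolding n_def by auto
      have "(\<Sum>l\<in>{0 + (j-1)..n + (j-1)}. b (i-l) * c (l+1-j)) = (\<Sum>m=0..n. b (i - (m + (j-1))) * c (m + (j-1) + 1 - j))"
        by (rule sum.shift_bounds_cl_nat_ivl)
      also have "\<dots> = (\<Sum>m=0..n. c m * b (n - m))"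
        using False unfolding n_def by (intro sum.cong refl) (auto simp: mult.commute add.commute)
      also have "\<dots> = (if n = 0 then 1 else 0)" using conv by simp
      finally show ?thesis using s set False True unfolding n_def by auto
    next
      case False2: False
      have set: "{l\<in>{0..<k}. l \<le> i \<and> j \<le> l+1} = {}" using False2 by auto
      show ?thesis using s set False False2 by auto
    qed
  qed
qed

lemma det_hess:
  fixes b c :: "nat \<Rightarrow> complex"
  assumes conv: "\<forall>n. (\<Sum>m=0..n. c m * b (n-m)) = (if n=0 then 1 else 0)" and b0: "b 0 = 1"
  shows "det (mat k k (\<lambda>(i,j). if j \<le> i+1 then c (i+1-j) else 0)) = (-1)^k * b k"
proof -
  have c0: "c 0 = 1" using conv[rule_format, of 0] b0 by simp
  define T :: "complex mat" where "T = mat k k (\<lambda>(i,j). if j \<le> i+1 then c (i+1-j) else 0)"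
  define E :: "complex mat" where "E = mat k k (\<lambda>(i,j). if j \<le> i then b (i-j) else 0)"
  define M where "M = E * T"
  have T: "T \<in> carrier_mat k k" unfolding T_def by (rule mat_carrier)
  have E: "E \<in> carrier_mat k k" unfolding E_def by (rule mat_carrier)
  have M: "M \<in> carrier_mat k k" unfolding M_def using E T by (rule mult_carrier_mat)
  have detE: "det E = 1"
  proof -
    have "det E = prod_list (diag_mat E)"
    proof (rule det_lower_triangular[OF _ E])
      fix i j assume "i < j" "j < k"
      then show "E $$ (i, j) = 0" unfolding E_def by simp
    qed
    also have "diag_mat E = map (\<lambda>i. 1) [0..<k]"
      by (auto simp: diag_mat_def E_def b0)
    finally show ?thesis by (simp add: map_replicate_const)
  qed
  have Mij: "M $$ (i,j) = (if j = 0 then - b (i+1) else if j = i+1 then 1 else 0)"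
    if "i < k" "j < k" for i j
  proof -
    have "M $$ (i,j) = row E i \<bullet> col T j" unfolding M_def using that E T by (intro index_mult_mat(1)) auto
    also have "\<dots> = (\<Sum>l\<in>{0..<k}. vec_index (row E i) l * vec_index (col T j) l)"
      unfolding scalar_prod_def using T by simp
    also have "\<dots> = (\<Sum>l\<in>{0..<k}. (if l \<le> i then b (i-l) else 0) * (if j \<le> l+1 then c (l+1-j) else 0))"
      using that E T by (intro sum.cong refl) (simp add: E_def T_def)
    also have "\<dots> = (if j = 0 then - b (i+1) else if j = i+1 then 1 else 0)"
      by (rule sum_entry[OF conv c0 that(1)])
    finally show ?thesis .
  qed
  have detM: "det M = (-1)^k * b k"
  proof (cases k)
    case 0
    then show ?thesis using M b0 by (simp add: det_lower_triangular[OF _ M] diag_mat_def)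
  next
    case (Suc k')
    have "det M = (\<Sum>j<k. M $$ (k',j) * cofactor M k' j)"
      using laplace_expansion_row[OF M, of k'] Suc by simp
    also have "\<dots> = (\<Sum>j<k. if j = 0 then - b k * cofactor M k' 0 else 0)"
      using Suc by (intro sum.cong refl) (auto simp: Mij)
    also have "\<dots> = - b k * cofactor M k' 0" using Suc by simp
    also have "mat_delete M k' 0 = 1\<^sub>m k'"
      using M Suc by (intro eq_matI) (auto simp: mat_delete_def Mij)
    then have "cofactor M k' 0 = (-1)^k'" by (simp add: cofactor_def)
    finally show ?thesis using Suc by simp
  qed
  have "det M = det E * det T" unfolding M_def by (rule det_mult[OF E T])
  then show ?thesis using detE detM unfolding T_def by simp
qed

theorem lemma7:
  fixes f :: "nat \<Rightarrow> complex" and d :: nat and \<sigma> :: real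
  assumes "d \<ge> 1" and "in_S d f" and "\<sigma> > 0"
  shows "\<exists>C. \<forall>p::nat. prime p \<longrightarrow>
           summable (\<lambda>n. cmod (D_f f n p) / real p powr (real n * \<sigma>)) \<and>
           (\<Sum>n. cmod (D_f f n p) / real p powr (real n * \<sigma>)) \<le> C"
proof -
  obtain fs where fs: "\<forall>i<d. compl_mult (fs i) \<and> (\<forall>n>0. cmod (fs i n) \<le> 1)"
    and fdef: "\<forall>n>0. f n = conv_all fs d n"
    using assms(2) unfolding in_S_def by blast
  have "\<forall>p::nat. prime p \<longrightarrow>
           summable (\<lambda>n. cmod (D_f f n p) / real p powr (real n * \<sigma>)) \<and>
           (\<Sum>n. cmod (D_f f n p) / real p powr (real n * \<sigma>)) \<le> real (Suc d) * 2^d"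
  proof (intro allI impI)
    fix p :: nat assume p: "prime p"
    have p1: "p > 1" using p prime_gt_1_nat by blast
    define \<alpha> where "\<alpha> = (\<lambda>i. fs i p)"
    define b where "b = (\<lambda>n. Bp \<alpha> d $ n)"
    define c where "c = (\<lambda>n. f (p^n))"
    have cC: "c n = Cp \<alpha> d $ n" for n
    proof -
      have "p^n > 0" using p1 by simp
      then show ?thesis unfolding c_def \<alpha>_def using fdef conv_pp[OF p, of d fs d n] fs by auto
    qed
    have conv: "\<forall>n. (\<Sum>m=0..n. c m * b (n-m)) = (if n=0 then 1 else 0)"
    proof
      fix n
      have "(\<Sum>m=0..n. c m * b (n-m)) = (Cp \<alpha> d * Bp \<alpha> d) $ n"
        by (simp add: fps_mult_nth cC b_def)
      also have "Cp \<alpha> d * Bp \<alpha> d = 1" using BC[of \<alpha> d] by (simp add: mult.commute)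
      finally show "(\<Sum>m=0..n. c m * b (n-m)) = (if n=0 then 1 else 0)" by simp
    qed
    have bp: "b 0 = 1" "\<And>n. n > d \<Longrightarrow> b n = 0" "\<And>n. cmod (b n) \<le> 2^d"
    proof -
      have h: "\<forall>i<d. cmod (\<alpha> i) \<le> 1" using fs p1 unfolding \<alpha>_def by auto
      show "b 0 = 1" "\<And>n. n > d \<Longrightarrow> b n = 0" "\<And>n. cmod (b n) \<le> 2^d"
        using B_props[of \<alpha> d] h unfolding b_def by auto
    qed
    have Db: "D_f f n p = (-1)^n * b n" for n
      unfolding D_f_def using det_hess[OF conv bp(1), of n] unfolding c_def by simp
    define g where "g = (\<lambda>n. cmod (D_f f n p) / real p powr (real n * \<sigma>))"
    have g0: "g n = 0" if "n \<notin> {..d}" for n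
      using that bp(2)[of n] unfolding g_def Db by (simp add: norm_mult)
    have gle: "g n \<le> 2^d" for n
    proof -
      have pw: "1 \<le> real p powr (real n * \<sigma>)"
        using p1 assms(3) by (intro ge_one_powr_ge_zero) auto
      have "g n \<le> cmod (D_f f n p)" unfolding g_def using pw
        by (simp add: divide_le_eq) (metis mult_left_mono mult.right_neutral norm_ge_zero)
      also have "\<dots> \<le> 2^d" unfolding Db using bp(3)[of n] by (simp add: norm_mult norm_power)
      finally show ?thesis .
    qed
    have sums: "g sums (\<Sum>n\<in>{..d}. g n)" by (rule sums_finite) (use g0 in auto)
    have "(\<Sum>n\<in>{..d}. g n) \<le> (\<Sum>n\<in>{..d}. 2^d)" by (rule sum_mono) (rule gle)
    then have "suminf g \<le> real (Suc d) * 2^d" using sums_unique[OF sums] by simp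
    then show "summable (\<lambda>n. cmod (D_f f n p) / real p powr (real n * \<sigma>)) \<and>
           (\<Sum>n. cmod (D_f f n p) / real p powr (real n * \<sigma>)) \<le> real (Suc d) * 2^d"
      using sums_summable[OF sums] unfolding g_def by simp
  qed
  then show ?thesis by blast
qed

end
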